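(* Let $N,K\ge1$, $\mathbf{g},\mathbf{h}_{r,k}\in\mathbb{C}^N$, $h_{d,k}\in\mathbb{C}$, $\sigma^2,\sigma_r^2,P_r,T_{\max}>0$, $E_k>0$ ($k=1,\dots,K$). Put $\mathbf{q}_k=\mathrm{diag}(\mathbf{g}^H)\mathbf{h}_{r,k}$, $\mathbf{G}=\mathrm{diag}(|[\mathbf{g}]_1|^2,\dots,|[\mathbf{g}]_N|^2)$, $\mathbf{H}_{r,k}=\mathrm{diag}(|[\mathbf{h}_{r,k}]_1|^2,\dots,|[\mathbf{h}_{r,k}]_N|^2)$, and $\gamma_k(\mathbf{v})=|h_{d,k}+\mathbf{v}^H\mathbf{q}_k|^2/(\sigma^2+\sigma_r^2\mathbf{v}^H\mathbf{G}\mathbf{v})$ for $\mathbf{v}\in\mathbb{C}^N$. Let $R^*_{\rm TDMA}$ be the optimal value of: maximize $\sum_k\tau_k\log_2(1+p_k\gamma_k(\mathbf{v}_k))$ over $\tau_k,p_k\in\mathbb{R}$, $\mathbf{v}_k\in\mathbb{C}^N$ ($k=1,\dots,K$), subject to $\tau_kp_k\le E_k$, $\sum_k\tau_k\le T_{\max}$, $\tau_k\ge0$, $p_k\ge0$, $p_k\mathbf{v}_k^H\mathbf{H}_{r,k}\mathbf{v}_k+\sigma_r^2\|\mathbf{v}_k\|^2\le P_r$ for all $k$. Let $R^*_{\rm NOMA}$ be the optimal value of: maximize $\tau\log_2(1+\sum_kp_k\gamma_k(\mathbf{v}))$ over $\tau,p_k\in\mathbb{R}$, $\mathbf{v}\in\mathbb{C}^N$,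 subject to $\tau p_k\le E_k$, $\tau\le T_{\max}$, $\tau\ge0$, $p_k\ge0$, $\sum_kp_k\mathbf{v}^H\mathbf{H}_{r,k}\mathbf{v}+\sigma_r^2\|\mathbf{v}\|^2\le P_r$. Let $(\{\breve p_k\},\breve{\mathbf{v}})$ be the optimal solution of the problem: maximize $\sum_k\tau_k\log_2(1+p_k\gamma_k(\mathbf{v}))$ over $\tau_k,p_k\in\mathbb{R}$ and a single $\mathbf{v}\in\mathbb{C}^N$ subject only to $\tau_kp_k\le E_k$, $\sum_k\tau_k\le T_{\max}$, $\tau_k\ge0$, $p_k\ge0$. If $\breve p_k\breve{\mathbf{v}}^H\mathbf{H}_{r,k}\breve{\mathbf{v}}+\sigma_r^2\|\breve{\mathbf{v}}\|^2\le P_r$ for all $k$, then $R^*_{\rm TDMA}\ge R^*_{\rm NOMA}$.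
   Context: $R^*_{\rm TDMA}$ is the optimal sum throughput of active-IRS-aided TDMA uplink with a dedicated IRS reflection/amplification vector $\mathbf{v}_k$ per device slot; $R^*_{\rm NOMA}$ that of NOMA with one shared IRS vector; $E_k$ is device $k$'s energy and $P_r$ the IRS amplification power budget. *)

theory Defs
  imports Complex_Main
begin

text \<open>Vectors in C^N are functions from a finite index type 'n (with N = CARD('n)).
  Devices are indexed by a finite type 'k (K = CARD('k)).\<close>

definition herm :: "('n::finite \<Rightarrow> complex) \<Rightarrow> ('n \<Rightarrow> complex) \<Rightarrow> complex" where
  "herm v w = (\<Sum>i\<in>UNIV. cnj (v i) * w i)"

definition qvec :: "('n::finite \<Rightarrow> complex) \<Rightarrow> ('n \<Rightarrow> complex) \<Rightarrow> ('n \<Rightarrow> complex)" where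
  "qvec g h = (\<lambda>i. cnj (g i) * h i)"

definition quad_diag :: "('n::finite \<Rightarrow> real) \<Rightarrow> ('n \<Rightarrow> complex) \<Rightarrow> real" where
  "quad_diag d v = (\<Sum>i\<in>UNIV. d i * (cmod (v i))\<^sup>2)"

definition sqmag :: "('n::finite \<Rightarrow> complex) \<Rightarrow> ('n \<Rightarrow> real)" where
  "sqmag x = (\<lambda>i. (cmod (x i))\<^sup>2)"

definition normsq :: "('n::finite \<Rightarrow> complex) \<Rightarrow> real" where
  "normsq v = (\<Sum>i\<in>UNIV. (cmod (v i))\<^sup>2)"

definition gam :: "real \<Rightarrow> real \<Rightarrow> ('n::finite \<Rightarrow> complex) \<Rightarrow> complex \<Rightarrow> ('n \<Rightarrow> complex)
                   \<Rightarrow> ('n \<Rightarrow> complex) \<Rightarrow> real" where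
  "gam \<sigma>2 \<sigma>r2 g hdir hr v =
     (cmod (hdir + herm v (qvec g hr)))\<^sup>2 / (\<sigma>2 + \<sigma>r2 * quad_diag (sqmag g) v)"

definition R_TDMA :: "real \<Rightarrow> real \<Rightarrow> real \<Rightarrow> real \<Rightarrow> ('k::finite \<Rightarrow> real)
   \<Rightarrow> ('n::finite \<Rightarrow> complex) \<Rightarrow> ('k \<Rightarrow> complex) \<Rightarrow> ('k \<Rightarrow> 'n \<Rightarrow> complex) \<Rightarrow> real" where
  "R_TDMA \<sigma>2 \<sigma>r2 Pr Tmax E g hdir hr = Sup
     {(\<Sum>k\<in>UNIV. \<tau> k * log 2 (1 + p k * gam \<sigma>2 \<sigma>r2 g (hdir k) (hr k) (V k))) | \<tau> p V.
        (\<forall>k. \<tau> k * p k \<le> E k \<and> \<tau> k \<ge> 0 \<and> p k \<ge> 0 \<and>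
              p k * quad_diag (sqmag (hr k)) (V k) + \<sigma>r2 * normsq (V k) \<le> Pr) \<and>
        (\<Sum>k\<in>UNIV. \<tau> k) \<le> Tmax}"

definition R_NOMA :: "real \<Rightarrow> real \<Rightarrow> real \<Rightarrow> real \<Rightarrow> ('k::finite \<Rightarrow> real)
   \<Rightarrow> ('n::finite \<Rightarrow> complex) \<Rightarrow> ('k \<Rightarrow> complex) \<Rightarrow> ('k \<Rightarrow> 'n \<Rightarrow> complex) \<Rightarrow> real" where
  "R_NOMA \<sigma>2 \<sigma>r2 Pr Tmax E g hdir hr = Sup
     {\<tau> * log 2 (1 + (\<Sum>k\<in>UNIV. p k * gam \<sigma>2 \<sigma>r2 g (hdir k) (hr k) v)) | \<tau> p v.
        (\<forall>k. \<tau> * p k \<le> E k \<and> p k \<ge> 0) \<and> \<tau> \<le> Tmax \<and> \<tau> \<ge> 0 \<and>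
        (\<Sum>k\<in>UNIV. p k * quad_diag (sqmag (hr k)) v) + \<sigma>r2 * normsq v \<le> Pr}"

definition relax_feasible :: "real \<Rightarrow> ('k::finite \<Rightarrow> real) \<Rightarrow> ('k \<Rightarrow> real) \<Rightarrow> ('k \<Rightarrow> real) \<Rightarrow> bool" where
  "relax_feasible Tmax E \<tau> p \<longleftrightarrow>
     (\<forall>k. \<tau> k * p k \<le> E k \<and> \<tau> k \<ge> 0 \<and> p k \<ge> 0) \<and> (\<Sum>k\<in>UNIV. \<tau> k) \<le> Tmax"

definition relax_obj :: "real \<Rightarrow> real \<Rightarrow> ('n::finite \<Rightarrow> complex) \<Rightarrow> ('k::finite \<Rightarrow> complex)
   \<Rightarrow> ('k \<Rightarrow> 'n \<Rightarrow> complex) \<Rightarrow> ('k \<Rightarrow> real) \<Rightarrow> ('k \<Rightarrow> real) \<Rightarrow> ('n \<Rightarrow> complex) \<Rightarrow> real" where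
  "relax_obj \<sigma>2 \<sigma>r2 g hdir hr \<tau> p v =
     (\<Sum>k\<in>UNIV. \<tau> k * log 2 (1 + p k * gam \<sigma>2 \<sigma>r2 g (hdir k) (hr k) v))"

end

theory Submission
  imports Defs
begin

lemma quad_nonneg: "quad_diag (sqmag x) v \<ge> 0"
  unfolding quad_diag_def sqmag_def by (intro sum_nonneg) simp

lemma normsq_nonneg: "normsq v \<ge> 0"
  unfolding normsq_def by (intro sum_nonneg) simp

lemma comp_le_normsq: "(cmod (v i))\<^sup>2 \<le> normsq v"
  unfolding normsq_def by (rule member_le_sum) auto

lemma gam_nonneg:
  assumes "\<sigma>2 > 0" "\<sigma>r2 > 0"
  shows "gam \<sigma>2 \<sigma>r2 g cc h v \<ge> 0"
  unfolding gam_def using assms quad_nonneg[of g v]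
  by (intro divide_nonneg_nonneg) auto

lemma gam_bound:
  assumes "\<sigma>2 > 0" "\<sigma>r2 > 0" "normsq v \<le> B"
  shows "gam \<sigma>2 \<sigma>r2 g cc h v \<le> (cmod cc + (1 + B) * (\<Sum>i\<in>UNIV. cmod (qvec g h i)))\<^sup>2 / \<sigma>2"
proof -
  have ci: "cmod (v i) \<le> 1 + B" for i
  proof -
    have "cmod (v i) \<le> 1 + (cmod (v i))\<^sup>2"
    proof -
      have "0 \<le> (cmod (v i) - 1)\<^sup>2" by simp
      hence "2 * cmod (v i) \<le> 1 + (cmod (v i))\<^sup>2" by (simp add: power2_diff)
      thus ?thesis using norm_ge_zero[of "v i"] by linarith
    qed
    thus ?thesis using comp_le_normsq[of v i] assms(3) by linarith
  qed
  have "cmod (herm v (qvec g h)) \<le> (\<Sum>i\<in>UNIV. cmod (cnj (v i) * qvec g h i))"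
    unfolding herm_def by (rule norm_sum)
  also have "\<dots> \<le> (\<Sum>i\<in>UNIV. (1 + B) * cmod (qvec g h i))"
    by (intro sum_mono) (simp add: norm_mult ci mult_right_mono)
  finally have hb: "cmod (herm v (qvec g h)) \<le> (1 + B) * (\<Sum>i\<in>UNIV. cmod (qvec g h i))"
    by (simp add: sum_distrib_left)
  have nb: "cmod (cc + herm v (qvec g h)) \<le> cmod cc + (1 + B) * (\<Sum>i\<in>UNIV. cmod (qvec g h i))"
    using norm_triangle_ineq[of cc "herm v (qvec g h)"] hb by linarith
  have sq: "(cmod (cc + herm v (qvec g h)))\<^sup>2 \<le> (cmod cc + (1 + B) * (\<Sum>i\<in>UNIV. cmod (qvec g h i)))\<^sup>2"
    by (rule power_mono[OF nb]) simp
  have den: "\<sigma>2 \<le> \<sigma>2 + \<sigma>r2 * quad_diag (sqmag g) v"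
    using assms quad_nonneg[of g v] by simp
  have "gam \<sigma>2 \<sigma>r2 g cc h v \<le> (cmod (cc + herm v (qvec g h)))\<^sup>2 / \<sigma>2"
    unfolding gam_def using den assms(1) by (intro divide_left_mono) auto
  also have "\<dots> \<le> (cmod cc + (1 + B) * (\<Sum>i\<in>UNIV. cmod (qvec g h i)))\<^sup>2 / \<sigma>2" using sq assms(1) by (intro divide_right_mono) auto
  finally show ?thesis .
qed

lemma log_term_bound:
  fixes t p x E :: real
  assumes "t \<ge> 0" "p \<ge> 0" "x \<ge> 0" "t * p \<le> E"
  shows "t * log 2 (1 + p * x) \<le> E * x / ln 2"
proof -
  have l: "ln (1 + p * x) \<le> p * x" using assms by (intro ln_add_one_self_le_self) simp
  have "t * log 2 (1 + p * x) = t * ln (1 + p * x) / ln 2" by (simp add: log_def)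
  also have "\<dots> \<le> t * (p * x) / ln 2"
    using l assms by (intro divide_right_mono mult_left_mono) auto
  also have "\<dots> \<le> E * x / ln 2"
    using assms by (intro divide_right_mono) (auto simp: mult.assoc[symmetric] intro: mult_right_mono)
  finally show ?thesis .
qed

theorem theorem1:
  fixes g :: "'n::finite \<Rightarrow> complex" and hr :: "'k::finite \<Rightarrow> 'n \<Rightarrow> complex"
    and hdir :: "'k \<Rightarrow> complex" and E :: "'k \<Rightarrow> real"
    and \<sigma>2 \<sigma>r2 Pr Tmax :: real
    and \<tau>b pb :: "'k \<Rightarrow> real" and vb :: "'n \<Rightarrow> complex"
  assumes "\<sigma>2 > 0" "\<sigma>r2 > 0" "Pr > 0" "Tmax > 0" "\<forall>k. E k > 0"
    and opt_feas: "relax_feasible Tmax E \<tau>b pb"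
    and opt_max: "\<forall>\<tau> p v. relax_feasible Tmax E \<tau> p \<longrightarrow>
                     relax_obj \<sigma>2 \<sigma>r2 g hdir hr \<tau> p v \<le> relax_obj \<sigma>2 \<sigma>r2 g hdir hr \<tau>b pb vb"
    and pow: "\<forall>k. pb k * quad_diag (sqmag (hr k)) vb + \<sigma>r2 * normsq vb \<le> Pr"
  shows "R_TDMA \<sigma>2 \<sigma>r2 Pr Tmax E g hdir hr \<ge> R_NOMA \<sigma>2 \<sigma>r2 Pr Tmax E g hdir hr"
proof -
  define M where "M = relax_obj \<sigma>2 \<sigma>r2 g hdir hr \<tau>b pb vb"
  let ?gm = "\<lambda>k v. gam \<sigma>2 \<sigma>r2 g (hdir k) (hr k) v"
  define T where "T = {(\<Sum>k\<in>UNIV. \<tau> k * log 2 (1 + p k * gam \<sigma>2 \<sigma>r2 g (hdir k) (hr k) (V k))) | \<tau> p V.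
        (\<forall>k. \<tau> k * p k \<le> E k \<and> \<tau> k \<ge> 0 \<and> p k \<ge> 0 \<and>
              p k * quad_diag (sqmag (hr k)) (V k) + \<sigma>r2 * normsq (V k) \<le> Pr) \<and>
        (\<Sum>k\<in>UNIV. \<tau> k) \<le> Tmax}"
  define N where "N = {\<tau> * log 2 (1 + (\<Sum>k\<in>UNIV. p k * gam \<sigma>2 \<sigma>r2 g (hdir k) (hr k) v)) | \<tau> p v.
        (\<forall>k. \<tau> * p k \<le> E k \<and> p k \<ge> 0) \<and> \<tau> \<le> Tmax \<and> \<tau> \<ge> 0 \<and>
        (\<Sum>k\<in>UNIV. p k * quad_diag (sqmag (hr k)) v) + \<sigma>r2 * normsq v \<le> Pr}"
  have MT: "M \<in> T"
    unfolding T_def M_def relax_obj_def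
    using opt_feas pow unfolding relax_feasible_def
    by (intro CollectI exI[of _ \<tau>b] exI[of _ pb] exI[of _ "\<lambda>_. vb"]) auto
  define B where "B = Pr / \<sigma>r2"
  define \<Gamma> where "\<Gamma> k = (cmod (hdir k) + (1 + B) * (\<Sum>i\<in>UNIV. cmod (qvec g (hr k) i)))\<^sup>2 / \<sigma>2" for k
  have bddT: "bdd_above T"
  proof (rule bdd_aboveI)
    fix x assume "x \<in> T"
    then obtain \<tau> p V where x: "x = (\<Sum>k\<in>UNIV. \<tau> k * log 2 (1 + p k * ?gm k (V k)))"
      and c: "\<forall>k. \<tau> k * p k \<le> E k \<and> \<tau> k \<ge> 0 \<and> p k \<ge> 0 \<and>
              p k * quad_diag (sqmag (hr k)) (V k) + \<sigma>r2 * normsq (V k) \<le> Pr"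
      unfolding T_def by blast
    have "\<tau> k * log 2 (1 + p k * ?gm k (V k)) \<le> E k * \<Gamma> k / ln 2" for k
    proof -
      have "p k * quad_diag (sqmag (hr k)) (V k) \<ge> 0" using c quad_nonneg
        by (intro mult_nonneg_nonneg) auto
      hence "\<sigma>r2 * normsq (V k) \<le> Pr" using c[rule_format, of k] by linarith
      hence nb: "normsq (V k) \<le> B" unfolding B_def using assms(2)
        by (simp add: pos_le_divide_eq mult.commute)
      have g0: "?gm k (V k) \<ge> 0" using gam_nonneg assms(1,2) by blast
      have "\<tau> k * log 2 (1 + p k * ?gm k (V k)) \<le> E k * ?gm k (V k) / ln 2"
        using c g0 by (intro log_term_bound) auto
      also have "\<dots> \<le> E k * \<Gamma> k / ln 2"
        unfolding \<Gamma>_def using gam_bound[OF assms(1,2) nb] assms(5)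
        by (intro divide_right_mono mult_left_mono) (auto simp: less_imp_le)
      finally show ?thesis .
    qed
    thus "x \<le> (\<Sum>k\<in>UNIV. E k * \<Gamma> k / ln 2)" unfolding x by (intro sum_mono)
  qed
  have MleT: "M \<le> Sup T" by (rule cSup_upper[OF MT bddT])
  have Nne: "N \<noteq> {}"
  proof -
    have "0 * log 2 (1 + (\<Sum>k\<in>UNIV. 0 * ?gm k (\<lambda>_. 0))) \<in> N"
      unfolding N_def using assms(3,4,5) by (intro CollectI exI[of _ 0] exI[of _ "\<lambda>_. 0"] exI[of _ "\<lambda>_. 0"])
        (auto simp: normsq_def less_imp_le)
    thus ?thesis by blast
  qed
  have NleM: "x \<le> M" if "x \<in> N" for x
  proof -
    obtain \<tau> p v where x: "x = \<tau> * log 2 (1 + (\<Sum>k\<in>UNIV. p k * ?gm k v))"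
      and c: "(\<forall>k. \<tau> * p k \<le> E k \<and> p k \<ge> 0) \<and> \<tau> \<le> Tmax \<and> \<tau> \<ge> 0"
      using \<open>x \<in> N\<close> unfolding N_def by blast
    define a where "a k = p k * ?gm k v" for k
    define A where "A = (\<Sum>k\<in>UNIV. a k)"
    have a0: "a k \<ge> 0" for k unfolding a_def using c gam_nonneg[OF assms(1,2)] by (intro mult_nonneg_nonneg) auto
    have A0: "A \<ge> 0" unfolding A_def using a0 by (intro sum_nonneg) auto
    show ?thesis
    proof (cases "A = 0")
      case True
      have "x = 0" unfolding x using True by (simp add: A_def a_def)
      moreover have "relax_obj \<sigma>2 \<sigma>r2 g hdir hr (\<lambda>_. 0) (\<lambda>_. 0) v \<le> M"
        unfolding M_def using opt_max assms(4,5) by (auto simp: relax_feasible_def less_imp_le)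
      ultimately show ?thesis by (simp add: relax_obj_def)
    next
      case False
      hence Ap: "A > 0" using A0 by simp
      define t where "t k = \<tau> * a k / A" for k
      define q where "q k = (if a k = 0 then 0 else A / ?gm k v)" for k
      have feas: "relax_feasible Tmax E t q"
        unfolding relax_feasible_def
      proof (intro conjI allI)
        fix k
        show "t k \<ge> 0" unfolding t_def using c a0 Ap by simp
        show "q k \<ge> 0" unfolding q_def using gam_nonneg[OF assms(1,2), of g "hdir k" "hr k" v] Ap by (auto intro: divide_nonneg_nonneg)
        show "t k * q k \<le> E k"
        proof (cases "a k = 0")
          case True thus ?thesis unfolding q_def using assms(5) by (simp add: less_imp_le)
        next
          case False
          hence "?gm k v \<noteq> 0" unfolding a_def by auto
          hence "t k * q k = \<tau> * p k" unfolding t_def q_def a_def using False Ap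
            by (simp add: a_def field_simps)
          thus ?thesis using c by simp
        qed
      next
        have "(\<Sum>k\<in>UNIV. t k) = \<tau> * A / A" unfolding t_def A_def
          by (simp add: sum_divide_distrib[symmetric] sum_distrib_left[symmetric])
        also have "\<dots> = \<tau>" using Ap by simp
        finally show "(\<Sum>k\<in>UNIV. t k) \<le> Tmax" using c by simp
      qed
      have trm: "t k * log 2 (1 + q k * ?gm k v) = \<tau> * log 2 (1 + A) * a k / A" for k
      proof (cases "a k = 0")
        case True thus ?thesis unfolding t_def q_def by simp
      next
        case False
        hence "?gm k v \<noteq> 0" unfolding a_def by auto
        hence "q k * ?gm k v = A" unfolding q_def using False by simp
        thus ?thesis unfolding t_def by simp
      qed
      have "relax_obj \<sigma>2 \<sigma>r2 g hdir hr t q v = (\<Sum>k\<in>UNIV. \<tau> * log 2 (1 + A) * a k / A)"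
        unfolding relax_obj_def using trm by simp
      also have "\<dots> = \<tau> * log 2 (1 + A) * A / A" unfolding A_def
        by (simp add: sum_divide_distrib[symmetric] sum_distrib_left[symmetric])
      also have "\<dots> = x" using Ap unfolding x A_def a_def by simp
      finally show ?thesis unfolding M_def using opt_max feas by metis
    qed
  qed
  have "Sup N \<le> M" using Nne NleM by (rule cSup_least)
  thus ?thesis unfolding R_TDMA_def R_NOMA_def using MleT unfolding T_def N_def by linarith
qed

end
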